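(* Fix positive integers $l,n,r$. Let $\mathcal{L}$ be the set of isomorphism classes of $(l,n,r)$-hypergraphs and let $\mathcal{S}$ be the set of equivalence classes of bases of $\mathrm{S}_{n,\leq r}$ of size $l$. Then there is a bijection $\rho:\mathcal{L}\to\mathcal{S}$.
   Context: $\mathrm{S}_{n,\leq r}$ denotes the symmetric group $\mathrm{S}_n$ acting naturally on the set of subsets of $[n]=\{1,\dots,n\}$ of size at most $r$. A base of $\mathrm{S}_{n,\leq r}$ is a set $\mathcal{B}$ of (distinct) subsets of $[n]$, each of size at most $r$, whose pointwise stabiliser in $\mathrm{S}_n$ is trivial; its size is $|\mathcal{B}|$. Two bases $\mathcal{B}_1,\mathcal{B}_2$ are equivalent if $\mathcal{B}_1^\sigma=\mathcal{B}_2$ for some $\sigma\in\mathrm{S}_n$. For a hypergraph $H=(V,E)$ (edges are subsets of $V$, possibly the empty set) and $v\in V$, the neighbourhood of $v$ is the multiset $N_H(v)=\{e\in E: v\in e\}$ and the degree of $v$ is $|N_H(v)|$. A hypergraph is irrepeating if all its edges are distinct and all its vertices have distinct neighbourhoods. An $(l,n,r)$-hypergraph is an irrepeating hypergraph with $l$ vertices, $n$ edges (possibly including the empty edge), and maximum vertex degree at most $r$. *)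

theory Defs
  imports "HOL-Combinatorics.Permutations"
begin

text \<open>Hypergraphs are pairs (V, E) with vertices of type nat; every finite
hypergraph is isomorphic to one of this kind. Edges form a set, so they are
automatically distinct.\<close>

type_synonym hypergraph = "nat set \<times> nat set set"

definition nbhd :: "nat set set \<Rightarrow> nat \<Rightarrow> nat set set" where
  "nbhd E v = {e \<in> E. v \<in> e}"

definition is_hypergraph :: "hypergraph \<Rightarrow> bool" where
  "is_hypergraph H \<longleftrightarrow> finite (fst H) \<and> (\<forall>e \<in> snd H. e \<subseteq> fst H)"

definition irrepeating :: "hypergraph \<Rightarrow> bool" where
  "irrepeating H \<longleftrightarrow> is_hypergraph H \<and> inj_on (nbhd (snd H)) (fst H)"

definition lnr_hypergraph :: "nat \<Rightarrow> nat \<Rightarrow> nat \<Rightarrow> hypergraph \<Rightarrow> bool" where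
  "lnr_hypergraph l n r H \<longleftrightarrow> irrepeating H \<and> card (fst H) = l \<and> card (snd H) = n
     \<and> (\<forall>v \<in> fst H. card (nbhd (snd H) v) \<le> r)"

definition hyp_iso :: "hypergraph \<Rightarrow> hypergraph \<Rightarrow> bool" where
  "hyp_iso H1 H2 \<longleftrightarrow> (\<exists>f. bij_betw f (fst H1) (fst H2) \<and> (\<lambda>e. f ` e) ` snd H1 = snd H2)"

definition lnr_classes :: "nat \<Rightarrow> nat \<Rightarrow> nat \<Rightarrow> hypergraph set set" where
  "lnr_classes l n r = {H. lnr_hypergraph l n r H} // {(H1, H2). hyp_iso H1 H2}"

text \<open>Bases of S_n acting on subsets of [n] = {1..n} of size at most r.\<close>

definition is_base :: "nat \<Rightarrow> nat \<Rightarrow> nat set set \<Rightarrow> bool" where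
  "is_base n r B \<longleftrightarrow> (\<forall>b \<in> B. b \<subseteq> {1..n} \<and> card b \<le> r)
     \<and> (\<forall>\<sigma>. \<sigma> permutes {1..n} \<and> (\<forall>b \<in> B. \<sigma> ` b = b) \<longrightarrow> \<sigma> = id)"

definition base_equiv :: "nat \<Rightarrow> nat set set \<Rightarrow> nat set set \<Rightarrow> bool" where
  "base_equiv n B1 B2 \<longleftrightarrow> (\<exists>\<sigma>. \<sigma> permutes {1..n} \<and> (\<lambda>b. \<sigma> ` b) ` B1 = B2)"

definition base_classes :: "nat \<Rightarrow> nat \<Rightarrow> nat \<Rightarrow> nat set set set set" where
  "base_classes l n r = {B. is_base n r B \<and> card B = l} // {(B1, B2). base_equiv n B1 B2}"

end

theory Submission
  imports Defs
begin

lemma quot_bij: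
  fixes r :: "'a \<Rightarrow> 'a \<Rightarrow> bool" and s :: "'b \<Rightarrow> 'b \<Rightarrow> bool"
  assumes rrefl: "\<And>a. a \<in> A \<Longrightarrow> r a a"
    and rsym: "\<And>a a'. a \<in> A \<Longrightarrow> a' \<in> A \<Longrightarrow> r a a' \<Longrightarrow> r a' a"
    and rtr: "\<And>x y z. r x y \<Longrightarrow> r y z \<Longrightarrow> r x z"
    and srefl: "\<And>b. b \<in> B \<Longrightarrow> s b b"
    and ssym: "\<And>b b'. b \<in> B \<Longrightarrow> b' \<in> B \<Longrightarrow> s b b' \<Longrightarrow> s b' b"
    and str: "\<And>x y z. s x y \<Longrightarrow> s y z \<Longrightarrow> s x z"
    and RA: "\<And>a b. R a b \<Longrightarrow> a \<in> A \<and> b \<in> B"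
    and Rl: "\<And>a. a \<in> A \<Longrightarrow> \<exists>b. R a b"
    and Rr: "\<And>b. b \<in> B \<Longrightarrow> \<exists>a. R a b"
    and Rc: "\<And>a b a' b'. R a b \<Longrightarrow> R a' b' \<Longrightarrow> r a a' = s b b'"
  shows "\<exists>\<rho>. bij_betw \<rho> (A // {(x, y). r x y}) (B // {(x, y). s x y})"
proof -
  let ?r = "{(x, y). r x y}" and ?s = "{(x, y). s x y}"
  have rc: "?r `` {a} = ?r `` {a'} \<longleftrightarrow> r a a'" if "a \<in> A" "a' \<in> A" for a a'
  proof
    assume "?r `` {a} = ?r `` {a'}"
    then have "a' \<in> ?r `` {a}" using rrefl[OF that(2)] by auto
    then show "r a a'" by auto
  next
    assume h: "r a a'"
    then have h': "r a' a" using rsym that by blast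
    show "?r `` {a} = ?r `` {a'}"
      using h h' rtr by blast
  qed
  have sc: "?s `` {a} = ?s `` {a'} \<longleftrightarrow> s a a'" if "a \<in> B" "a' \<in> B" for a a'
  proof
    assume "?s `` {a} = ?s `` {a'}"
    then have "a' \<in> ?s `` {a}" using srefl[OF that(2)] by auto
    then show "s a a'" by auto
  next
    assume h: "s a a'"
    then have h': "s a' a" using ssym that by blast
    show "?s `` {a} = ?s `` {a'}"
      using h h' str by blast
  qed
  define \<rho> where "\<rho> X = ?s `` {SOME b. \<exists>a. X = ?r `` {a} \<and> R a b}" for X
  have key: "\<rho> (?r `` {a0}) = ?s `` {b0}" if "R a0 b0" for a0 b0
  proof -
    have "\<exists>b. \<exists>a. ?r `` {a0} = ?r `` {a} \<and> R a b" using that by blast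
    then have "\<exists>a. ?r `` {a0} = ?r `` {a} \<and> R a (SOME b. \<exists>a. ?r `` {a0} = ?r `` {a} \<and> R a b)"
      by (rule someI_ex)
    then obtain a where a: "?r `` {a0} = ?r `` {a}" "R a (SOME b. \<exists>a. ?r `` {a0} = ?r `` {a} \<and> R a b)"
      by blast
    define b where "b = (SOME b. \<exists>a. ?r `` {a0} = ?r `` {a} \<and> R a b)"
    have ab: "R a b" using a(2) unfolding b_def .
    have "a \<in> A" "a0 \<in> A" "b \<in> B" "b0 \<in> B" using RA ab that by auto
    then have "r a0 a" using rc a(1) by blast
    then have "s b0 b" using Rc that ab by blast
    then have "?s `` {b} = ?s `` {b0}" using sc \<open>b \<in> B\<close> \<open>b0 \<in> B\<close> ssym by blast
    then show ?thesis unfolding \<rho>_def b_def by simp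
  qed
  have "bij_betw \<rho> (A // ?r) (B // ?s)"
  proof (rule bij_betw_imageI)
    show "inj_on \<rho> (A // ?r)"
    proof (rule inj_onI)
      fix X Y assume "X \<in> A // ?r" "Y \<in> A // ?r" and e: "\<rho> X = \<rho> Y"
      then obtain a a' where aa: "a \<in> A" "a' \<in> A" "X = ?r `` {a}" "Y = ?r `` {a'}"
        by (auto elim!: quotientE)
      obtain b b' where "R a b" "R a' b'" using Rl aa by blast
      then have "?s `` {b} = ?s `` {b'}" using key e aa by simp
      moreover have "b \<in> B" "b' \<in> B" using RA \<open>R a b\<close> \<open>R a' b'\<close> by auto
      ultimately have "s b b'" using sc by blast
      then have "r a a'" using Rc \<open>R a b\<close> \<open>R a' b'\<close> by blast
      then show "X = Y" using rc aa by simp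
    qed
    show "\<rho> ` (A // ?r) = B // ?s"
    proof
      show "\<rho> ` (A // ?r) \<subseteq> B // ?s"
      proof
        fix Y assume "Y \<in> \<rho> ` (A // ?r)"
        then obtain a where "a \<in> A" "Y = \<rho> (?r `` {a})" by (auto elim!: quotientE)
        moreover obtain b where "R a b" using Rl calculation by blast
        ultimately have "Y = ?s `` {b}" "b \<in> B" using key[of a b] RA[of a b] by auto
        then show "Y \<in> B // ?s" by (simp only: quotientI)
      qed
      show "B // ?s \<subseteq> \<rho> ` (A // ?r)"
      proof
        fix Y assume "Y \<in> B // ?s"
        then obtain b where "b \<in> B" "Y = ?s `` {b}" by (auto elim!: quotientE)
        moreover obtain a where "R a b" using Rr calculation by blast
        ultimately show "Y \<in> \<rho> ` (A // ?r)" using key[of a b] RA[of a b]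
          by (metis (no_types, lifting) quotientI image_eqI)
      qed
    qed
  qed
  then show ?thesis by blast
qed

definition iiso :: "'a set \<Rightarrow> 'b set \<Rightarrow> ('a \<Rightarrow> 'b \<Rightarrow> bool) \<Rightarrow> 'c set \<Rightarrow> 'd set \<Rightarrow> ('c \<Rightarrow> 'd \<Rightarrow> bool) \<Rightarrow> bool" where
  "iiso X1 Y1 I1 X2 Y2 I2 \<longleftrightarrow> (\<exists>f g. bij_betw f X1 X2 \<and> bij_betw g Y1 Y2 \<and>
     (\<forall>x\<in>X1. \<forall>y\<in>Y1. I1 x y = I2 (f x) (g y)))"

lemma iiso_sym: "iiso X1 Y1 I1 X2 Y2 I2 \<Longrightarrow> iiso X2 Y2 I2 X1 Y1 I1"
proof -
  assume "iiso X1 Y1 I1 X2 Y2 I2"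
  then obtain f g where fg: "bij_betw f X1 X2" "bij_betw g Y1 Y2"
    "\<forall>x\<in>X1. \<forall>y\<in>Y1. I1 x y = I2 (f x) (g y)" unfolding iiso_def by blast
  let ?f = "inv_into X1 f" and ?g = "inv_into Y1 g"
  have "bij_betw ?f X2 X1" "bij_betw ?g Y2 Y1" using fg bij_betw_inv_into by blast+
  moreover have "\<forall>x\<in>X2. \<forall>y\<in>Y2. I2 x y = I1 (?f x) (?g y)"
  proof (intro ballI)
    fix x y assume "x \<in> X2" "y \<in> Y2"
    then have "?f x \<in> X1" "?g y \<in> Y1" "f (?f x) = x" "g (?g y) = y"
      using fg by (auto simp: bij_betw_def inv_into_into f_inv_into_f)
    then show "I2 x y = I1 (?f x) (?g y)" using fg(3) by metis
  qed
  ultimately show ?thesis unfolding iiso_def by blast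
qed

lemma iiso_trans: "iiso X1 Y1 I1 X2 Y2 I2 \<Longrightarrow> iiso X2 Y2 I2 X3 Y3 I3 \<Longrightarrow> iiso X1 Y1 I1 X3 Y3 I3"
proof -
  assume "iiso X1 Y1 I1 X2 Y2 I2" "iiso X2 Y2 I2 X3 Y3 I3"
  then obtain f g f' g' where fg: "bij_betw f X1 X2" "bij_betw g Y1 Y2"
    "\<forall>x\<in>X1. \<forall>y\<in>Y1. I1 x y = I2 (f x) (g y)" 
    and fg': "bij_betw f' X2 X3" "bij_betw g' Y2 Y3"
    "\<forall>x\<in>X2. \<forall>y\<in>Y2. I2 x y = I3 (f' x) (g' y)" unfolding iiso_def by blast
  have "bij_betw (f' \<circ> f) X1 X3" "bij_betw (g' \<circ> g) Y1 Y3" using fg fg' bij_betw_trans by blast+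
  moreover have "\<forall>x\<in>X1. \<forall>y\<in>Y1. I1 x y = I3 ((f' \<circ> f) x) ((g' \<circ> g) y)"
    using fg fg' by (auto simp: bij_betw_def)
  ultimately show ?thesis unfolding iiso_def by blast
qed


lemma hyp_iso_iff:
  assumes "is_hypergraph H1" "is_hypergraph H2"
  shows "hyp_iso H1 H2 \<longleftrightarrow> iiso (fst H1) (snd H1) (\<lambda>v e. v \<in> e) (fst H2) (snd H2) (\<lambda>v e. v \<in> e)"
proof
  assume "hyp_iso H1 H2"
  then obtain f where f: "bij_betw f (fst H1) (fst H2)" "(\<lambda>e. f ` e) ` snd H1 = snd H2"
    unfolding hyp_iso_def by blast
  have sub: "\<And>e. e \<in> snd H1 \<Longrightarrow> e \<subseteq> fst H1" using assms(1) unfolding is_hypergraph_def by blast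
  have inj: "inj_on f (fst H1)" using f by (simp add: bij_betw_def)
  have "inj_on (\<lambda>e. f ` e) (snd H1)"
    using inj sub by (smt (verit, ccfv_SIG) inj_on_image_eq_iff inj_onI)
  then have "bij_betw (\<lambda>e. f ` e) (snd H1) (snd H2)" using f(2) by (simp add: bij_betw_def)
  moreover have "\<forall>x\<in>fst H1. \<forall>y\<in>snd H1. (x \<in> y) = (f x \<in> f ` y)"
    using inj sub by (meson inj_on_image_mem_iff)
  ultimately show "iiso (fst H1) (snd H1) (\<lambda>v e. v \<in> e) (fst H2) (snd H2) (\<lambda>v e. v \<in> e)"
    using f(1) unfolding iiso_def by blast
next
  assume "iiso (fst H1) (snd H1) (\<lambda>v e. v \<in> e) (fst H2) (snd H2) (\<lambda>v e. v \<in> e)"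
  then obtain f g where fg: "bij_betw f (fst H1) (fst H2)" "bij_betw g (snd H1) (snd H2)"
    "\<forall>x\<in>fst H1. \<forall>y\<in>snd H1. (x \<in> y) = (f x \<in> g y)" unfolding iiso_def by blast
  have sub1: "\<And>e. e \<in> snd H1 \<Longrightarrow> e \<subseteq> fst H1" using assms(1) unfolding is_hypergraph_def by blast
  have sub2: "\<And>e. e \<in> snd H2 \<Longrightarrow> e \<subseteq> fst H2" using assms(2) unfolding is_hypergraph_def by blast
  have eq: "f ` e = g e" if "e \<in> snd H1" for e
  proof
    show "f ` e \<subseteq> g e" using fg(3) sub1 that by blast
    show "g e \<subseteq> f ` e"
    proof
      fix w assume w: "w \<in> g e"
      then have "w \<in> fst H2" using sub2 fg(2) that by (meson bij_betwE subsetD)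
      then obtain v where "v \<in> fst H1" "w = f v" using fg(1) by (metis bij_betw_imp_surj_on imageE)
      then show "w \<in> f ` e" using fg(3) that w by blast
    qed
  qed
  have "(\<lambda>e. f ` e) ` snd H1 = g ` snd H1" using eq by (auto simp: image_iff)
  also have "\<dots> = snd H2" using fg(2) by (simp add: bij_betw_def)
  finally show "hyp_iso H1 H2" unfolding hyp_iso_def using fg(1) by blast
qed

lemma base_equiv_iff:
  assumes "\<forall>b\<in>B1. b \<subseteq> {1..n}" "\<forall>b\<in>B2. b \<subseteq> {1..n}"
  shows "base_equiv n B1 B2 \<longleftrightarrow> iiso B1 {1..n} (\<lambda>b i. i \<in> b) B2 {1..n} (\<lambda>b i. i \<in> b)"
proof
  assume "base_equiv n B1 B2"
  then obtain \<sigma> where s: "\<sigma> permutes {1..n}" "(\<lambda>b. \<sigma> ` b) ` B1 = B2"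
    unfolding base_equiv_def by blast
  have inj: "inj \<sigma>" using s(1) by (rule permutes_inj)
  have "inj_on (\<lambda>b. \<sigma> ` b) B1" using inj by (simp add: inj_on_def inj_image_eq_iff)
  then have "bij_betw (\<lambda>b. \<sigma> ` b) B1 B2" using s(2) by (simp add: bij_betw_def)
  moreover have "bij_betw \<sigma> {1..n} {1..n}" using s(1) by (rule permutes_imp_bij)
  moreover have "\<forall>x\<in>B1. \<forall>y\<in>{1..n}. (y \<in> x) = (\<sigma> y \<in> \<sigma> ` x)"
    using inj by (simp add: inj_image_mem_iff)
  ultimately show "iiso B1 {1..n} (\<lambda>b i. i \<in> b) B2 {1..n} (\<lambda>b i. i \<in> b)"
    unfolding iiso_def by blast
next
  assume "iiso B1 {1..n} (\<lambda>b i. i \<in> b) B2 {1..n} (\<lambda>b i. i \<in> b)"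
  then obtain f g where fg: "bij_betw f B1 B2" "bij_betw g {1..n} {1..n}"
    "\<forall>x\<in>B1. \<forall>y\<in>{1..n}. (y \<in> x) = (g y \<in> f x)" unfolding iiso_def by blast
  define \<sigma> where "\<sigma> i = (if i \<in> {1..n} then g i else i)" for i
  have bs: "bij_betw \<sigma> {1..n} {1..n}" using fg(2) unfolding \<sigma>_def
    by (rule bij_betw_cong[THEN iffD1, rotated]) simp
  have sp: "\<sigma> permutes {1..n}"
    by (rule bij_imp_permutes[OF bs]) (auto simp only: \<sigma>_def if_False)
  have eq: "\<sigma> ` b = f b" if "b \<in> B1" for b
  proof
    show "\<sigma> ` b \<subseteq> f b" using fg(3) that assms(1) unfolding \<sigma>_def by fastforce
    show "f b \<subseteq> \<sigma> ` b"
    proof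
      fix w assume w: "w \<in> f b"
      then have "w \<in> {1..n}" using assms(2) fg(1) that by (meson bij_betwE subsetD)
      then obtain v where v: "v \<in> {1..n}" "w = g v" using fg(2) by (metis bij_betw_imp_surj_on imageE)
      then have "v \<in> b" using fg(3) that w by blast
      then show "w \<in> \<sigma> ` b" using v unfolding \<sigma>_def by force
    qed
  qed
  have "(\<lambda>b. \<sigma> ` b) ` B1 = f ` B1" using eq by (auto simp: image_iff)
  also have "\<dots> = B2" using fg(1) by (simp add: bij_betw_def)
  finally show "base_equiv n B1 B2" unfolding base_equiv_def using sp by blast
qed

lemma hyp_to_base:
  assumes H: "lnr_hypergraph l n r (V, E)"
  shows "\<exists>B. is_base n r B \<and> card B = l \<and> iiso V E (\<lambda>v e. v \<in> e) B {1..n} (\<lambda>b i. i \<in> b)"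
proof -
  have finV: "finite V" and sub: "\<And>e. e \<in> E \<Longrightarrow> e \<subseteq> V" and injN: "inj_on (nbhd E) V"
    and cV: "card V = l" and cE: "card E = n" and deg: "\<And>v. v \<in> V \<Longrightarrow> card (nbhd E v) \<le> r"
    using H unfolding lnr_hypergraph_def irrepeating_def is_hypergraph_def by auto
  have finE: "finite E" using finV sub by (meson PowI finite_Pow_iff finite_subset subsetI)
  obtain \<phi> where phi: "bij_betw \<phi> E {1..n}" using finite_same_card_bij[OF finE] cE by force
  have injphi: "inj_on \<phi> E" and imphi: "\<phi> ` E = {1..n}" using phi by (auto simp: bij_betw_def)
  have Nsub: "nbhd E v \<subseteq> E" for v unfolding nbhd_def by blast
  define \<psi> where "\<psi> v = \<phi> ` nbhd E v" for v
  define B where "B = \<psi> ` V"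
  have injpsi: "inj_on \<psi> V"
  proof (rule inj_onI)
    fix v w assume "v \<in> V" "w \<in> V" "\<psi> v = \<psi> w"
    then have "nbhd E v = nbhd E w" unfolding \<psi>_def using inj_on_image_eq_iff[OF injphi Nsub Nsub] by blast
    then show "v = w" using injN \<open>v \<in> V\<close> \<open>w \<in> V\<close> by (meson inj_onD)
  qed
  have bpsi: "bij_betw \<psi> V B" unfolding B_def using injpsi by (simp add: bij_betw_def)
  have cB: "card B = l" using bpsi cV bij_betw_same_card by metis
  have inc: "\<forall>v\<in>V. \<forall>e\<in>E. (v \<in> e) = (\<phi> e \<in> \<psi> v)"
  proof (intro ballI)
    fix v e assume "v \<in> V" "e \<in> E"
    then show "(v \<in> e) = (\<phi> e \<in> \<psi> v)" unfolding \<psi>_def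
      using inj_on_image_mem_iff[OF injphi \<open>e \<in> E\<close> Nsub] unfolding nbhd_def by blast
  qed
  have isb: "is_base n r B"
    unfolding is_base_def
  proof (intro conjI ballI allI impI)
    fix b assume "b \<in> B"
    then obtain v where v: "v \<in> V" "b = \<psi> v" unfolding B_def by blast
    show "b \<subseteq> {1..n}" using v imphi Nsub unfolding \<psi>_def by blast
    have "card b = card (nbhd E v)" unfolding v \<psi>_def
      by (rule card_image[OF inj_on_subset[OF injphi Nsub]])
    then show "card b \<le> r" using deg v by simp
  next
    fix \<sigma> assume a: "\<sigma> permutes {1..n} \<and> (\<forall>b\<in>B. \<sigma> ` b = b)"
    have injs: "inj \<sigma>" using a permutes_inj by blast
    show "\<sigma> = id"
    proof
      fix i
      show "\<sigma> i = id i"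
      proof (cases "i \<in> {1..n}")
        case False
        then show ?thesis using a permutes_not_in[of \<sigma> "{1..n}" i] by simp
      next
        case True
        then have si: "\<sigma> i \<in> {1..n}" using a permutes_in_image[of \<sigma> "{1..n}" i] by simp
        define e where "e = inv_into E \<phi> i"
        define e' where "e' = inv_into E \<phi> (\<sigma> i)"
        have e: "e \<in> E" "\<phi> e = i" using True imphi unfolding e_def
          by (auto intro: inv_into_into f_inv_into_f)
        have e': "e' \<in> E" "\<phi> e' = \<sigma> i" using si imphi unfolding e'_def
          by (auto intro: inv_into_into f_inv_into_f)
        have "v \<in> e \<longleftrightarrow> v \<in> e'" if "v \<in> V" for v
        proof -
          have "\<sigma> ` \<psi> v = \<psi> v" using a that unfolding B_def by blast
          have "v \<in> e \<longleftrightarrow> i \<in> \<psi> v" using inc that e by metis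
          also have "\<dots> \<longleftrightarrow> \<sigma> i \<in> \<sigma> ` \<psi> v" using injs by (simp add: inj_image_mem_iff)
          also have "\<dots> \<longleftrightarrow> \<sigma> i \<in> \<psi> v" using \<open>\<sigma> ` \<psi> v = \<psi> v\<close> by simp
          also have "\<dots> \<longleftrightarrow> v \<in> e'" using inc that e' by metis
          finally show ?thesis .
        qed
        then have "e = e'" using sub e(1) e'(1) by blast
        then show ?thesis using e e' by simp
      qed
    qed
  qed
  have "iiso V E (\<lambda>v e. v \<in> e) B {1..n} (\<lambda>b i. i \<in> b)"
    unfolding iiso_def using bpsi phi inc by blast
  then show ?thesis using isb cB by blast
qed

lemma transpose_image_fix:
  assumes "i \<in> b \<longleftrightarrow> j \<in> b"
  shows "transpose i j ` b = b"
proof -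
  have mem: "transpose i j x \<in> b \<longleftrightarrow> x \<in> b" for x
    using assms by (cases "x = i"; cases "x = j") simp_all
  show ?thesis
  proof
    show "transpose i j ` b \<subseteq> b" using mem by blast
    show "b \<subseteq> transpose i j ` b"
    proof
      fix x assume "x \<in> b"
      then have "transpose i j x \<in> b" using mem by blast
      moreover have "transpose i j (transpose i j x) = x" by simp
      ultimately show "x \<in> transpose i j ` b" by (metis image_eqI)
    qed
  qed
qed

lemma base_to_hyp:
  assumes Bb: "is_base n r B" and cB: "card B = l" and l: "0 < l"
  shows "\<exists>H. lnr_hypergraph l n r H \<and> iiso (fst H) (snd H) (\<lambda>v e. v \<in> e) B {1..n} (\<lambda>b i. i \<in> b)"
proof -
  have finB: "finite B" by (rule card_ge_0_finite) (simp add: cB l)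
  have bsub: "\<And>b. b \<in> B \<Longrightarrow> b \<subseteq> {1..n}" and bcard: "\<And>b. b \<in> B \<Longrightarrow> card b \<le> r"
    and stab: "\<And>\<sigma>. \<sigma> permutes {1..n} \<Longrightarrow> (\<forall>b\<in>B. \<sigma> ` b = b) \<Longrightarrow> \<sigma> = id"
    using Bb unfolding is_base_def by auto
  obtain \<psi> where psi: "bij_betw \<psi> {0..<l} B" using ex_bij_betw_nat_finite[OF finB] cB by blast
  define V where "V = {0..<l}"
  have injpsi: "inj_on \<psi> V" and impsi: "\<psi> ` V = B" using psi unfolding V_def by (auto simp: bij_betw_def)
  define g where "g i = {v \<in> V. i \<in> \<psi> v}" for i
  define E where "E = g ` {1..n}"
  have injg: "inj_on g {1..n}"
  proof (rule inj_onI, rule ccontr)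
    fix i j assume ij: "i \<in> {1..n}" "j \<in> {1..n}" "g i = g j" "i \<noteq> j"
    have "\<forall>b\<in>B. transpose i j ` b = b"
    proof
      fix b assume "b \<in> B"
      then obtain v where v: "v \<in> V" "b = \<psi> v" using impsi by blast
      have "v \<in> g i \<longleftrightarrow> v \<in> g j" using ij by simp
      then have "i \<in> b \<longleftrightarrow> j \<in> b" using v unfolding g_def by simp
      then show "transpose i j ` b = b" by (rule transpose_image_fix)
    qed
    then have "transpose i j = id" by (rule stab[OF permutes_swap_id[OF ij(1) ij(2)]])
    then have "transpose i j i = i" by simp
    then show False using ij by simp
  qed
  have bg: "bij_betw g {1..n} E" using injg unfolding E_def by (simp add: bij_betw_def)
  define \<phi> where "\<phi> = inv_into {1..n} g"
  have bphi: "bij_betw \<phi> E {1..n}" unfolding \<phi>_def using bg by (rule bij_betw_inv_into)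
  have psisub: "\<psi> v \<subseteq> {1..n}" if "v \<in> V" for v using that impsi bsub by blast
  have Nv: "nbhd E v = g ` \<psi> v" if "v \<in> V" for v
  proof
    show "nbhd E v \<subseteq> g ` \<psi> v"
    proof
      fix e assume "e \<in> nbhd E v"
      then obtain i where "i \<in> {1..n}" "e = g i" "v \<in> g i" unfolding nbhd_def E_def by blast
      then have "i \<in> \<psi> v" unfolding g_def by blast
      then show "e \<in> g ` \<psi> v" using \<open>e = g i\<close> by blast
    qed
    show "g ` \<psi> v \<subseteq> nbhd E v"
    proof
      fix e assume "e \<in> g ` \<psi> v"
      then obtain i where i: "i \<in> \<psi> v" "e = g i" by blast
      then have "i \<in> {1..n}" using psisub[OF that] by blast
      moreover have "v \<in> g i" using i that unfolding g_def by blast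
      ultimately show "e \<in> nbhd E v" using i unfolding nbhd_def E_def by blast
    qed
  qed
  have gsub: "g i \<subseteq> V" for i unfolding g_def by blast
  have hyp: "is_hypergraph (V, E)" unfolding is_hypergraph_def
    using gsub unfolding E_def V_def by auto
  have injN: "inj_on (nbhd E) V"
  proof (rule inj_onI)
    fix v w assume "v \<in> V" "w \<in> V" "nbhd E v = nbhd E w"
    then have "g ` \<psi> v = g ` \<psi> w" using Nv by simp
    then have "\<psi> v = \<psi> w" using inj_on_image_eq_iff[OF injg psisub[OF \<open>v \<in> V\<close>] psisub[OF \<open>w \<in> V\<close>]] by blast
    then show "v = w" using injpsi \<open>v \<in> V\<close> \<open>w \<in> V\<close> by (meson inj_onD)
  qed
  have cV: "card V = l" unfolding V_def by simp
  have cE: "card E = n" using bij_betw_same_card[OF bg] by simp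
  have deg: "card (nbhd E v) \<le> r" if "v \<in> V" for v
  proof -
    have "card (nbhd E v) = card (\<psi> v)" using Nv[OF that] card_image[OF inj_on_subset[OF injg psisub[OF that]]] by simp
    moreover have "\<psi> v \<in> B" using impsi that by blast
    ultimately show ?thesis using bcard by simp
  qed
  have lnr: "lnr_hypergraph l n r (V, E)"
    unfolding lnr_hypergraph_def irrepeating_def using hyp injN cV cE deg by simp
  have inc: "\<forall>v\<in>V. \<forall>e\<in>E. (v \<in> e) = (\<phi> e \<in> \<psi> v)"
  proof (intro ballI)
    fix v e assume "v \<in> V" "e \<in> E"
    then obtain i where i: "i \<in> {1..n}" "e = g i" unfolding E_def by blast
    have "\<phi> e = i" unfolding \<phi>_def i(2) using injg i(1) by (rule inv_into_f_f)
    then show "(v \<in> e) = (\<phi> e \<in> \<psi> v)" using i \<open>v \<in> V\<close> unfolding g_def by simp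
  qed
  have "iiso V E (\<lambda>v e. v \<in> e) B {1..n} (\<lambda>b i. i \<in> b)"
    unfolding iiso_def using psi bphi inc unfolding V_def by blast
  then show ?thesis using lnr by (intro exI[of _ "(V, E)"]) simp
qed

theorem proposition2p2:
  fixes l n r :: nat
  assumes "0 < l" and "0 < n" and "0 < r"
  shows "\<exists>\<rho>. bij_betw \<rho> (lnr_classes l n r) (base_classes l n r)"
proof -
  define R where "R H B \<longleftrightarrow> lnr_hypergraph l n r H \<and> is_base n r B \<and> card B = l \<and>
      iiso (fst H) (snd H) (\<lambda>v e. v \<in> e) B {1..n} (\<lambda>b i. i \<in> b)" for H B
  let ?A = "{H. lnr_hypergraph l n r H}" and ?B = "{B. is_base n r B \<and> card B = l}"
  have hypA: "is_hypergraph H" if "H \<in> ?A" for H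
    using that unfolding lnr_hypergraph_def irrepeating_def by simp
  have subB: "\<forall>b\<in>B. b \<subseteq> {1..n}" if "B \<in> ?B" for B using that unfolding is_base_def by simp
  have iirefl: "iiso X Y I X Y I" for X Y I unfolding iiso_def
    by (intro exI[of _ id]) (simp add: bij_betw_id)
  show ?thesis
    unfolding lnr_classes_def base_classes_def
  proof (rule quot_bij[where R = R])
    show "hyp_iso a a" if "a \<in> ?A" for a
      using hyp_iso_iff[OF hypA hypA, OF that that] iirefl by blast
    show "hyp_iso a' a" if "a \<in> ?A" "a' \<in> ?A" "hyp_iso a a'" for a a'
      using hyp_iso_iff[OF hypA hypA, OF that(1,2)] hyp_iso_iff[OF hypA hypA, OF that(2,1)] that(3) iiso_sym
      by blast
    show "hyp_iso x z" if h: "hyp_iso x y" "hyp_iso y z" for x y z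
    proof -
      obtain f where f: "bij_betw f (fst x) (fst y)" "(\<lambda>e. f ` e) ` snd x = snd y"
        using h(1) unfolding hyp_iso_def by blast
      obtain f' where f': "bij_betw f' (fst y) (fst z)" "(\<lambda>e. f' ` e) ` snd y = snd z"
        using h(2) unfolding hyp_iso_def by blast
      have "bij_betw (f' \<circ> f) (fst x) (fst z)" by (rule bij_betw_trans[OF f(1) f'(1)])
      moreover have "(\<lambda>e. (f' \<circ> f) ` e) ` snd x = (\<lambda>e. f' ` e) ` ((\<lambda>e. f ` e) ` snd x)"
        by (simp add: image_image image_comp)
      then have "(\<lambda>e. (f' \<circ> f) ` e) ` snd x = snd z" using f(2) f'(2) by simp
      ultimately show ?thesis unfolding hyp_iso_def by blast
    qed
    show "base_equiv n b b" if "b \<in> ?B" for b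
      using base_equiv_iff[OF subB subB, OF that that] iirefl by blast
    show "base_equiv n b' b" if "b \<in> ?B" "b' \<in> ?B" "base_equiv n b b'" for b b'
      using base_equiv_iff[OF subB subB, OF that(1,2)] base_equiv_iff[OF subB subB, OF that(2,1)] that(3) iiso_sym
      by blast
    show "base_equiv n x z" if h: "base_equiv n x y" "base_equiv n y z" for x y z
    proof -
      obtain s where s: "s permutes {1..n}" "(\<lambda>b. s ` b) ` x = y"
        using h(1) unfolding base_equiv_def by blast
      obtain s' where s': "s' permutes {1..n}" "(\<lambda>b. s' ` b) ` y = z"
        using h(2) unfolding base_equiv_def by blast
      have "s' \<circ> s permutes {1..n}" by (rule permutes_compose[OF s(1) s'(1)])
      moreover have "(\<lambda>b. (s' \<circ> s) ` b) ` x = (\<lambda>b. s' ` b) ` ((\<lambda>b. s ` b) ` x)"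
        by (simp add: image_image image_comp)
      then have "(\<lambda>b. (s' \<circ> s) ` b) ` x = z" using s(2) s'(2) by simp
      ultimately show ?thesis unfolding base_equiv_def by blast
    qed
    show "a \<in> ?A \<and> b \<in> ?B" if "R a b" for a b using that unfolding R_def by simp
    show "\<exists>b. R a b" if h: "a \<in> ?A" for a
    proof -
      obtain V E where a: "a = (V, E)" by fastforce
      show ?thesis using hyp_to_base[of l n r V E] h unfolding R_def a by auto
    qed
    show "\<exists>a. R a b" if "b \<in> ?B" for b
      using base_to_hyp[of n r b l] that assms(1) unfolding R_def by auto
    show "hyp_iso a a' = base_equiv n b b'" if "R a b" "R a' b'" for a b a' b'
    proof -
      have a: "a \<in> ?A" "a' \<in> ?A" "b \<in> ?B" "b' \<in> ?B" using that unfolding R_def by auto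
      have i1: "iiso (fst a) (snd a) (\<lambda>v e. v \<in> e) b {1..n} (\<lambda>b i. i \<in> b)"
        and i2: "iiso (fst a') (snd a') (\<lambda>v e. v \<in> e) b' {1..n} (\<lambda>b i. i \<in> b)"
        using that unfolding R_def by auto
      have "hyp_iso a a' \<longleftrightarrow> iiso (fst a) (snd a) (\<lambda>v e. v \<in> e) (fst a') (snd a') (\<lambda>v e. v \<in> e)"
        using hyp_iso_iff[OF hypA hypA, OF a(1,2)] .
      also have "\<dots> \<longleftrightarrow> iiso b {1..n} (\<lambda>b i. i \<in> b) b' {1..n} (\<lambda>b i. i \<in> b)"
        using i1 i2 iiso_sym iiso_trans by metis
      also have "\<dots> \<longleftrightarrow> base_equiv n b b'"
        using base_equiv_iff[OF subB subB, OF a(3,4)] by simp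
      finally show ?thesis .
    qed
  qed
qed

end
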